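(* Let $m_0<m$ be the number of true null hypotheses (i.e. $m_0=\#\{i:d^t_i=0\}$), and assume $m_0\ge1$. For the additive-loss procedure with constant threshold $\beta$ (decisions $\hat d_i=I(v_{in}>\beta)$), let $pBFDR_\beta$ be its $pBFDR$. Then for any $0<\alpha<m_0/m$ there exists a sequence $\beta_n\to0$ as $n\to\infty$ such that $\lim_{n\to\infty}pBFDR_{\beta_n}=\alpha$.
   Context: Data and models: $\mathbf X_n=(X_1,\ldots,X_n)$ are the first $n$ coordinates of a process with true distribution $P$; $p(\mathbf X_n)$ is the true joint density and $f_{\boldsymbol\theta}(\mathbf X_n)$ the postulated density for $\boldsymbol\theta=(\theta_1,\ldots,\theta_M)\in\boldsymbol\Theta=\Theta_1\times\cdots\times\Theta_M$ ($M\le\infty$). $\pi$ is a prior, $\pi(\cdot\mid\mathbf X_n)$ the posterior; $E_{\mathbf X_n}$ is expectation over the data under $P$. For $i=1,\ldots,m$ ($m$ finite) one tests $H_{0i}:\theta_i\in\Theta_{0i}$ vs $H_{1i}:\theta_i\in\Theta_{1i}$ with $\Theta_{0i}\cap\Theta_{1i}=\emptyset$, $\Theta_{0i}\cup\Theta_{1i}=\Theta_i$. Decision configurations $\mathbf d\in\mathbb D=\{0,1\}^m$ ($d_i=1$: reject $H_{0i}$); $\mathbf 0$ is the all-zero configuration. KL quantities: $h(\boldsymbol\theta)=\lim_n n^{-1}E_P[\log(p/f_{\boldsymbol\theta})(\mathbf X_n)]$, $J(\boldsymbol\theta)=h(\boldsymbol\theta)-h(\boldsymbol\Theta)$ where $h(A)=\pi\text{-}\operatorname{ess\,inf}_A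 h$, and $J(A)=\pi\text{-}\operatorname{ess\,inf}_A J$. The true configuration $\mathbf d^t$ is the unique $\mathbf d$ with $J(\prod_{i\le m}\Theta_{d_ii}\times\prod_{i>m}\Theta_i)=J(\boldsymbol\Theta)$, where $\Theta_{d_ii}$ is $\Theta_{0i}$ or $\Theta_{1i}$ according as $d_i=0$ or $1$. Let $\Upsilon_{ki}=\{\boldsymbol\theta:\theta_i\in\Theta_{ki}\}$, $J(H_{ki})=J(\Upsilon_{ki})$ and $v_{in}=\pi(\Upsilon_{1i}\mid\mathbf X_n)$. Standing assumption (conclusion of Shalizi's (2009) theorem under his conditions (S1)–(S7), assumed throughout): for all $i,k$, $\pi(\Upsilon_{ki})>0$ and $\lim_n n^{-1}\log\pi(\Upsilon_{ki}\mid\mathbf X_n)=-J(\Upsilon_{ki})$ a.s.; $J(H_{1i})>0$ if $d^t_i=0$ and $J(H_{0i})>0$ if $d^t_i=1$. Error measures for a procedure with decision indicator $\delta$: $FDR_{\mathbf X_n}=\sum_{\mathbf d}\frac{\sum_i d_i(1-v_{in})}{(\sum_i d_i)\vee1}\delta(\mathbf d\mid\mathbf X_n)$, $pBFDR=E_{\mathbf X_n}[FDR_{\mathbf X_n}\mid\delta(\mathbf 0\mid\mathbf X_n)=0]$. Known fact used (Chandra and Bhattacharya 2017): for each $n$, $\beta\mapsto pBFDR_\beta$ is continuous and non-increasing on $[0,1]$. *)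

theory Defs
  imports "HOL-Probability.Probability"
begin

text \<open>The data process lives on a probability space M (the true law P).
  For sample size n, hypothesis index i < m and outcome w, v n i w is the posterior
  probability v_in = pi(Upsilon_1i | X_n) of the alternative H_1i.\<close>

definition add_decision :: "real \<Rightarrow> (nat \<Rightarrow> real) \<Rightarrow> nat \<Rightarrow> bool" where
  "add_decision \<beta> vn i \<longleftrightarrow> vn i > \<beta>"

definition FDR_X :: "nat \<Rightarrow> (nat \<Rightarrow> real) \<Rightarrow> (nat \<Rightarrow> bool) \<Rightarrow> real" where
  "FDR_X m vn d = (\<Sum>i<m. if d i then 1 - vn i else 0) / real (max (card {i. i < m \<and> d i}) 1)"

text \<open>The event that the decision is not the all-zero configuration, i.e. delta(0 | X_n) = 0.\<close>
definition nonnull_event ::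
  "'a measure \<Rightarrow> nat \<Rightarrow> (nat \<Rightarrow> nat \<Rightarrow> 'a \<Rightarrow> real) \<Rightarrow> real \<Rightarrow> nat \<Rightarrow> 'a set" where
  "nonnull_event M m v \<beta> n = {w \<in> space M. \<exists>i<m. add_decision \<beta> (\<lambda>j. v n j w) i}"

text \<open>pBFDR_beta at sample size n: E[FDR_X | delta(0|X_n) = 0]
  = E[FDR_X ; event] / P(event) (elementary conditional expectation given an event).\<close>
definition pBFDR ::
  "'a measure \<Rightarrow> nat \<Rightarrow> (nat \<Rightarrow> nat \<Rightarrow> 'a \<Rightarrow> real) \<Rightarrow> nat \<Rightarrow> real \<Rightarrow> real" where
  "pBFDR M m v n \<beta> =
     (\<integral>w. indicator (nonnull_event M m v \<beta> n) w
            * FDR_X m (\<lambda>j. v n j w) (add_decision \<beta> (\<lambda>j. v n j w)) \<partial>M)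
     / measure M (nonnull_event M m v \<beta> n)"

end

theory Submission
  imports Defs "HOL-Real_Asymp.Real_Asymp"
begin

lemma FDR_bounds:
  assumes "\<And>i. i < m \<Longrightarrow> 0 \<le> x i \<and> x i \<le> 1"
  shows "0 \<le> FDR_X m x d \<and> FDR_X m x d \<le> 1"
proof -
  have c: "real (card {i. i < m \<and> d i}) = (\<Sum>i<m. if d i then 1 else 0)"
  proof -
    have "{i. i < m \<and> d i} = {..<m} \<inter> {i. d i}" by auto
    then show ?thesis by (simp add: sum.If_cases)
  qed
  have n0: "0 \<le> (\<Sum>i<m. if d i then 1 - x i else 0)"
    using assms by (intro sum_nonneg) auto
  have "(\<Sum>i<m. if d i then 1 - x i else 0) \<le> (\<Sum>i<m. if d i then 1 else (0::real))"
    using assms by (intro sum_mono) auto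
  also have "\<dots> \<le> real (max (card {i. i < m \<and> d i}) 1)" using c by simp
  finally have "(\<Sum>i<m. if d i then 1 - x i else 0) \<le> real (max (card {i. i < m \<and> d i}) 1)" .
  moreover have "real (max (card {i. i < m \<and> d i}) 1) > 0" by simp
  ultimately show ?thesis using n0 unfolding FDR_X_def by (simp add: divide_le_eq_1)
qed

lemma conv_bounded:
  fixes s :: "nat \<Rightarrow> 'a \<Rightarrow> real"
  assumes P: "prob_space M"
    and meas: "\<And>n. s n \<in> borel_measurable M"
    and bnd: "\<And>n w. w \<in> space M \<Longrightarrow> \<bar>s n w\<bar> \<le> 1"
    and lim: "AE w in M. (\<lambda>n. s n w) \<longlonglongrightarrow> L"
  shows "(\<lambda>n. integral\<^sup>L M (s n)) \<longlonglongrightarrow> L"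
proof -
  interpret prob_space M by (rule P)
  have "(\<lambda>n. integral\<^sup>L M (s n)) \<longlonglongrightarrow> integral\<^sup>L M (\<lambda>_. L)"
    by (rule integral_dominated_convergence[where w="\<lambda>_. 1"]) (use meas bnd lim in auto)
  then show ?thesis by (simp add: prob_space)
qed
lemma meas_facts:
  fixes v :: "nat \<Rightarrow> nat \<Rightarrow> 'a \<Rightarrow> real"
  assumes v_meas: "\<And>n i. i < m \<Longrightarrow> v n i \<in> borel_measurable M"
  shows "nonnull_event M m v \<beta> n \<in> sets M"
    "(\<lambda>w. FDR_X m (\<lambda>j. v n j w) (add_decision \<beta> (\<lambda>j. v n j w))) \<in> borel_measurable M"
proof -
  have e: "nonnull_event M m v \<beta> n = (\<Union>i<m. {w\<in>space M. \<beta> < v n i w})"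
    unfolding nonnull_event_def add_decision_def by auto
  show "nonnull_event M m v \<beta> n \<in> sets M" unfolding e using v_meas by (intro sets.countable_UN') auto
  have c: "\<And>w. real (card {i. i < m \<and> \<beta> < v n i w}) = (\<Sum>i<m. if \<beta> < v n i w then 1 else 0)"
  proof -
    fix w
    have "{i. i < m \<and> \<beta> < v n i w} = {..<m} \<inter> {i. \<beta> < v n i w}" by auto
    then show "real (card {i. i < m \<and> \<beta> < v n i w}) = (\<Sum>i<m. if \<beta> < v n i w then 1 else 0)"
      by (simp add: sum.If_cases)
  qed
  have mx: "\<And>w. real (max (card {i. i < m \<and> \<beta> < v n i w}) 1) = max (\<Sum>i<m. if \<beta> < v n i w then 1 else 0) 1"
    using c by (metis of_nat_1 of_nat_max)
  show "(\<lambda>w. FDR_X m (\<lambda>j. v n j w) (add_decision \<beta> (\<lambda>j. v n j w))) \<in> borel_measurable M"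
    unfolding FDR_X_def add_decision_def mx
  proof (intro borel_measurable_divide borel_measurable_max borel_measurable_sum borel_measurable_const)
    fix i assume "i \<in> {..<m}"
    then have [measurable]: "v n i \<in> borel_measurable M" using v_meas by auto
    show "(\<lambda>w. if \<beta> < v n i w then 1 - v n i w else 0) \<in> borel_measurable M" by measurable
    show "(\<lambda>w. if \<beta> < v n i w then 1 else 0::real) \<in> borel_measurable M" by measurable
  qed
qed

lemma pBFDR_lim:
  fixes v :: "nat \<Rightarrow> nat \<Rightarrow> 'a \<Rightarrow> real" and D :: "nat \<Rightarrow> bool"
  assumes P: "prob_space M"
    and v_meas: "\<And>n i. i < m \<Longrightarrow> v n i \<in> borel_measurable M"
    and v_range: "\<And>n i w. i < m \<Longrightarrow> w \<in> space M \<Longrightarrow> 0 \<le> v n i w \<and> v n i w \<le> 1"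
    and Dex: "\<exists>i<m. D i"
    and ev: "AE w in M. eventually (\<lambda>n. \<forall>i<m. (\<beta> < v n i w \<longleftrightarrow> D i)) sequentially"
    and sl: "AE w in M. (\<lambda>n. (\<Sum>i<m. if D i then 1 - v n i w else 0)) \<longlonglongrightarrow> S"
  shows "(\<lambda>n. pBFDR M m v n \<beta>) \<longlonglongrightarrow> S / real (card {i. i < m \<and> D i})"
proof -
  interpret prob_space M by (rule P)
  define c where "c = real (card {i. i < m \<and> D i})"
  have cpos: "card {i. i < m \<and> D i} \<ge> 1"
  proof -
    from Dex obtain i where "i < m" "D i" by auto
    then have "{i. i < m \<and> D i} \<noteq> {}" by auto
    moreover have "finite {i. i < m \<and> D i}" by auto
    ultimately show ?thesis by (simp add: Suc_leI card_gt_0_iff)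
  qed
  define E where "E n = nonnull_event M m v \<beta> n" for n
  define F where "F n w = FDR_X m (\<lambda>j. v n j w) (add_decision \<beta> (\<lambda>j. v n j w))" for n w
  have Esets: "E n \<in> sets M" for n unfolding E_def using meas_facts(1)[of m v M, OF v_meas] by blast
  have Fmeas: "F n \<in> borel_measurable M" for n unfolding F_def using meas_facts(2)[of m v M, OF v_meas] by blast
  have Fb: "w \<in> space M \<Longrightarrow> 0 \<le> F n w \<and> F n w \<le> 1" for n w
    unfolding F_def using v_range by (intro FDR_bounds) auto
  have key: "AE w in M. eventually (\<lambda>n. indicator (E n) w = (1::real) \<and>
      F n w = (\<Sum>i<m. if D i then 1 - v n i w else 0) / c) sequentially"
    using AE_space ev
  proof (eventually_elim)
    case (elim w)
    show ?case using elim(2)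
    proof (rule eventually_mono)
      fix n assume h: "\<forall>i<m. (\<beta> < v n i w) = D i"
      from Dex obtain i where "i < m" "D i" by auto
      with h have "w \<in> E n" using elim(1) unfolding E_def nonnull_event_def add_decision_def by auto
      moreover have "{i. i < m \<and> \<beta> < v n i w} = {i. i < m \<and> D i}" using h by auto
      moreover have "(\<Sum>i<m. if \<beta> < v n i w then 1 - v n i w else 0) = (\<Sum>i<m. if D i then 1 - v n i w else 0)"
        using h by (intro sum.cong) auto
      ultimately show "indicator (E n) w = (1::real) \<and> F n w = (\<Sum>i<m. if D i then 1 - v n i w else 0) / c"
        unfolding F_def FDR_X_def add_decision_def c_def using cpos by (simp add: max_def)
    qed
  qed
  have I1: "(\<lambda>n. integral\<^sup>L M (\<lambda>w. indicator (E n) w * F n w)) \<longlonglongrightarrow> S / c"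
  proof (rule conv_bounded[OF P])
    show "(\<lambda>w. indicator (E n) w * F n w) \<in> borel_measurable M" for n
      using Esets Fmeas by measurable
    show "\<bar>indicator (E n) w * F n w\<bar> \<le> 1" if "w \<in> space M" for n w
      using Fb[OF that, of n] by (auto simp: indicator_def)
    show "AE w in M. (\<lambda>n. indicator (E n) w * F n w) \<longlonglongrightarrow> S / c"
      using key sl
    proof eventually_elim
      case (elim w)
      have "(\<lambda>n. (\<Sum>i<m. if D i then 1 - v n i w else 0) / c) \<longlonglongrightarrow> S / c"
        using elim(2) cpos Dex by (intro tendsto_divide tendsto_const) (auto simp: c_def)
      then show ?case
        by (rule Lim_transform_eventually) (use elim(1) in \<open>auto elim: eventually_mono\<close>)
    qed
  qed
  have I2: "(\<lambda>n. measure M (E n)) \<longlonglongrightarrow> 1"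
  proof -
    have "(\<lambda>n. integral\<^sup>L M (indicator (E n) :: 'a \<Rightarrow> real)) \<longlonglongrightarrow> 1"
    proof (rule conv_bounded[OF P])
      show "(indicator (E n) :: 'a \<Rightarrow> real) \<in> borel_measurable M" for n
        using Esets by measurable
      show "\<bar>indicator (E n) w :: real\<bar> \<le> 1" for n w by (auto simp: indicator_def)
      show "AE w in M. (\<lambda>n. indicator (E n) w :: real) \<longlonglongrightarrow> 1"
        using key
      proof eventually_elim
        case (elim w)
        show ?case by (rule Lim_transform_eventually[OF tendsto_const]) (use elim in \<open>auto elim: eventually_mono\<close>)
      qed
    qed
    then show ?thesis using Esets by simp
  qed
  have "(\<lambda>n. integral\<^sup>L M (\<lambda>w. indicator (E n) w * F n w) / measure M (E n)) \<longlonglongrightarrow> (S / c) / 1"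
    by (intro tendsto_divide I1 I2) auto
  then show ?thesis unfolding pBFDR_def E_def F_def c_def by simp
qed

lemma ln_to_zero:
  fixes x :: "nat \<Rightarrow> real"
  assumes nn: "\<And>n. 0 \<le> x n" and l: "(\<lambda>n. ln (x n) / real n) \<longlonglongrightarrow> - c" and c: "c > 0"
  shows "x \<longlonglongrightarrow> 0" "eventually (\<lambda>n. 0 < x n) sequentially"
proof -
  have ev: "eventually (\<lambda>n. ln (x n) / real n < - c / 2) sequentially"
    using order_tendstoD(2)[OF l] c by auto
  show "eventually (\<lambda>n. 0 < x n) sequentially"
    using ev
  proof (rule eventually_mono)
    fix n assume "ln (x n) / real n < - c / 2"
    then have "ln (x n) \<noteq> 0" using c by auto
    then show "0 < x n" using nn[of n] by (metis ln_0 order_le_less)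
  qed
  have ub: "eventually (\<lambda>n. x n \<le> exp (- (c/2) * real n)) sequentially"
    using ev eventually_gt_at_top[of 0]
  proof (eventually_elim)
    case (elim n)
    show ?case
    proof (cases "x n = 0")
      case True then show ?thesis by simp
    next
      case False
      then have xp: "x n > 0" using nn[of n] by auto
      have "ln (x n) < - c / 2 * real n" using elim by (simp add: divide_less_eq)
      then have "exp (ln (x n)) \<le> exp (- (c/2) * real n)" by simp
      then show ?thesis using xp by simp
    qed
  qed
  have "(\<lambda>n. exp (- (c/2) * real n)) \<longlonglongrightarrow> 0" using c by real_asymp
  moreover have "eventually (\<lambda>n. 0 \<le> x n) sequentially" using nn by simp
  ultimately show "x \<longlonglongrightarrow> 0"
    using ub tendsto_sandwich[of "\<lambda>_. 0" x sequentially "\<lambda>n. exp (- (c/2) * real n)" 0] by blast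
qed

theorem theorem9:
  fixes M :: "'a measure"
    and m :: nat
    and dt :: "nat \<Rightarrow> bool"
    and v :: "nat \<Rightarrow> nat \<Rightarrow> 'a \<Rightarrow> real"
    and J0 J1 :: "nat \<Rightarrow> real"
  assumes prob: "prob_space M"
    and v_meas: "\<And>n i. i < m \<Longrightarrow> v n i \<in> borel_measurable M"
    and v_range: "\<And>n i w. i < m \<Longrightarrow> w \<in> space M \<Longrightarrow> 0 \<le> v n i w \<and> v n i w \<le> 1"
    and shalizi1: "\<And>i. i < m \<Longrightarrow>
        AE w in M. (\<lambda>n. ln (v n i w) / real n) \<longlonglongrightarrow> - J1 i"
    and shalizi0: "\<And>i. i < m \<Longrightarrow>
        AE w in M. (\<lambda>n. ln (1 - v n i w) / real n) \<longlonglongrightarrow> - J0 i"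
    and J1_pos: "\<And>i. i < m \<Longrightarrow> \<not> dt i \<Longrightarrow> J1 i > 0"
    and J0_pos: "\<And>i. i < m \<Longrightarrow> dt i \<Longrightarrow> J0 i > 0"
    and m0_pos: "card {i. i < m \<and> \<not> dt i} \<ge> 1"
    and m0_lt: "card {i. i < m \<and> \<not> dt i} < m"
    and cont: "\<And>n. continuous_on {0..1} (pBFDR M m v n)"
    and mono: "\<And>n \<beta>1 \<beta>2. 0 \<le> \<beta>1 \<Longrightarrow> \<beta>1 \<le> \<beta>2 \<Longrightarrow> \<beta>2 \<le> 1 \<Longrightarrow>
                 pBFDR M m v n \<beta>2 \<le> pBFDR M m v n \<beta>1"
  shows "\<forall>\<alpha>. 0 < \<alpha> \<and> \<alpha> < real (card {i. i < m \<and> \<not> dt i}) / real m \<longrightarrow>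
           (\<exists>\<beta> :: nat \<Rightarrow> real. (\<forall>n. 0 \<le> \<beta> n \<and> \<beta> n \<le> 1) \<and> \<beta> \<longlonglongrightarrow> 0 \<and>
              (\<lambda>n. pBFDR M m v n (\<beta> n)) \<longlonglongrightarrow> \<alpha>)"
  proof (intro allI impI)
  fix \<alpha> :: real
  assume a: "0 < \<alpha> \<and> \<alpha> < real (card {i. i < m \<and> \<not> dt i}) / real m"
  interpret prob_space M by (rule prob)
  define m0 where "m0 = card {i. i < m \<and> \<not> dt i}"
  define g where "g n = pBFDR M m v n" for n
  have mpos: "m > 0" using m0_lt by auto
  have good: "AE w in M. \<forall>i\<in>{..<m}. (\<lambda>n. ln (v n i w) / real n) \<longlonglongrightarrow> - J1 i \<and>
                  (\<lambda>n. ln (1 - v n i w) / real n) \<longlonglongrightarrow> - J0 i"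
    using shalizi0 shalizi1 by (intro AE_finite_allI) auto
  have pw: "AE w in M. (\<forall>i<m. (\<lambda>n. v n i w) \<longlonglongrightarrow> (if dt i then 1 else 0)) \<and>
       (\<forall>i<m. \<not> dt i \<longrightarrow> eventually (\<lambda>n. 0 < v n i w) sequentially)"
    using AE_space good
  proof eventually_elim
    case (elim w)
    have L: "(\<lambda>n. v n i w) \<longlonglongrightarrow> (if dt i then 1 else 0)" if i: "i < m" for i
    proof (cases "dt i")
      case True
      have "(\<lambda>n. 1 - v n i w) \<longlonglongrightarrow> 0"
        using ln_to_zero(1)[of "\<lambda>n. 1 - v n i w" "J0 i"] elim i v_range J0_pos True by auto
      then have "(\<lambda>n. 1 - (1 - v n i w)) \<longlonglongrightarrow> 1 - 0" by (intro tendsto_diff tendsto_const)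
      then show ?thesis using True by simp
    next
      case False
      then show ?thesis
        using ln_to_zero(1)[of "\<lambda>n. v n i w" "J1 i"] elim i v_range J1_pos by auto
    qed
    moreover have "eventually (\<lambda>n. 0 < v n i w) sequentially" if "i < m" "\<not> dt i" for i
      using ln_to_zero(2)[of "\<lambda>n. v n i w" "J1 i"] elim that v_range J1_pos by auto
    ultimately show ?case by auto
  qed
  have A: "(\<lambda>n. g n 0) \<longlonglongrightarrow> real m0 / real m"
  proof -
    have "(\<lambda>n. pBFDR M m v n 0) \<longlonglongrightarrow> real m0 / real (card {i. i < m \<and> True})"
    proof (rule pBFDR_lim[OF prob v_meas v_range])
      show "\<exists>i<m. True" using mpos by auto
      show "AE w in M. eventually (\<lambda>n. \<forall>i<m. (0 < v n i w \<longleftrightarrow> True)) sequentially"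
        using pw
      proof eventually_elim
        case (elim w)
        have "\<forall>i\<in>{..<m}. eventually (\<lambda>n. 0 < v n i w) sequentially"
        proof
          fix i assume i: "i \<in> {..<m}"
          show "eventually (\<lambda>n. 0 < v n i w) sequentially"
          proof (cases "dt i")
            case True
            then show ?thesis using elim i order_tendstoD(1)[of "\<lambda>n. v n i w" 1 sequentially 0] by auto
          next
            case False
            then show ?thesis using elim i by auto
          qed
        qed
        then have "eventually (\<lambda>n. \<forall>i\<in>{..<m}. 0 < v n i w) sequentially"
          by (intro eventually_ball_finite) auto
        then show ?case by (auto elim: eventually_mono)
      qed
      show "AE w in M. (\<lambda>n. \<Sum>i<m. if True then 1 - v n i w else 0) \<longlonglongrightarrow> real m0"
        using pw
      proof eventually_elim
        case (elim w)
        have "(\<lambda>n. \<Sum>i<m. 1 - v n i w) \<longlonglongrightarrow> (\<Sum>i<m. 1 - (if dt i then 1 else 0))"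
          using elim by (intro tendsto_sum tendsto_diff tendsto_const) auto
        moreover have "(\<Sum>i<m. 1 - (if dt i then 1 else 0::real)) = real m0"
        proof -
          have "(\<Sum>i<m. 1 - (if dt i then 1 else 0::real)) = (\<Sum>i<m. if \<not> dt i then 1 else 0)"
            by (intro sum.cong) auto
          also have "\<dots> = real (card ({..<m} \<inter> {i. \<not> dt i}))" by (simp add: sum.If_cases)
          also have "{..<m} \<inter> {i. \<not> dt i} = {i. i < m \<and> \<not> dt i}" by auto
          finally show ?thesis unfolding m0_def .
        qed
        ultimately show ?case by simp
      qed
    qed
    then show ?thesis unfolding g_def by simp
  qed
  have B: "(\<lambda>n. g n b) \<longlonglongrightarrow> 0" if b: "0 < b" "b < 1" for b
  proof -
    have "(\<lambda>n. pBFDR M m v n b) \<longlonglongrightarrow> 0 / real (card {i. i < m \<and> dt i})"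
    proof (rule pBFDR_lim[OF prob v_meas v_range])
      show "\<exists>i<m. dt i"
      proof (rule ccontr)
        assume "\<not> (\<exists>i<m. dt i)"
        then have "{i. i < m \<and> \<not> dt i} = {..<m}" by auto
        then show False using m0_lt by simp
      qed
      show "AE w in M. eventually (\<lambda>n. \<forall>i<m. (b < v n i w \<longleftrightarrow> dt i)) sequentially"
        using pw
      proof eventually_elim
        case (elim w)
        have "\<forall>i\<in>{..<m}. eventually (\<lambda>n. b < v n i w \<longleftrightarrow> dt i) sequentially"
        proof
          fix i assume i: "i \<in> {..<m}"
          show "eventually (\<lambda>n. b < v n i w \<longleftrightarrow> dt i) sequentially"
          proof (cases "dt i")
            case True
            then show ?thesis using elim i b order_tendstoD(1)[of "\<lambda>n. v n i w" 1 sequentially b] by auto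
          next
            case False
            then have "eventually (\<lambda>n. v n i w < b) sequentially"
              using elim i b order_tendstoD(2)[of "\<lambda>n. v n i w" 0 sequentially b] by auto
            then show ?thesis using False by (auto elim: eventually_mono)
          qed
        qed
        then have "eventually (\<lambda>n. \<forall>i\<in>{..<m}. b < v n i w \<longleftrightarrow> dt i) sequentially"
          by (intro eventually_ball_finite) auto
        then show ?case by (auto elim: eventually_mono)
      qed
      show "AE w in M. (\<lambda>n. \<Sum>i<m. if dt i then 1 - v n i w else 0) \<longlonglongrightarrow> 0"
        using pw
      proof eventually_elim
        case (elim w)
        have "(\<lambda>n. \<Sum>i<m. if dt i then 1 - v n i w else 0) \<longlonglongrightarrow> (\<Sum>i<m. if dt i then 1 - 1 else 0::real)"
        proof (intro tendsto_sum)
          fix i assume i: "i \<in> {..<m}"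
          show "(\<lambda>n. if dt i then 1 - v n i w else 0) \<longlonglongrightarrow> (if dt i then 1 - 1 else 0::real)"
          proof (cases "dt i")
            case True
            then have "(\<lambda>n. v n i w) \<longlonglongrightarrow> 1" using elim i by auto
            then have "(\<lambda>n. 1 - v n i w) \<longlonglongrightarrow> 1 - 1" by (intro tendsto_diff tendsto_const)
            then show ?thesis using True by simp
          qed auto
        qed
        then show ?case by (simp add: if_distrib cong: if_cong)
      qed
    qed
    then show ?thesis unfolding g_def by simp
  qed
  have a0: "\<alpha> < real m0 / real m" using a unfolding m0_def by simp
  have sol: "eventually (\<lambda>n. \<exists>b\<in>{0..e}. g n b = \<alpha>) sequentially" if e: "0 < e" "e < 1" for e
  proof -
    have "eventually (\<lambda>n. \<alpha> < g n 0) sequentially" using order_tendstoD(1)[OF A a0] .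
    moreover have "eventually (\<lambda>n. g n e < \<alpha>) sequentially" using order_tendstoD(2)[OF B[OF e] ] a by auto
    ultimately show ?thesis
    proof eventually_elim
      case (elim n)
      have "continuous_on {0..e} (g n)"
        unfolding g_def by (rule continuous_on_subset[OF cont[of n]]) (use e in auto)
      then show ?case using IVT2'[of "g n" e \<alpha> 0] elim e by auto
    qed
  qed
  define S where "S n = {b\<in>{0..1}. g n b = \<alpha>}" for n
  define \<beta> where "\<beta> n = (if S n \<noteq> {} then Inf (S n) else 0)" for n
  have clS: "closed (S n)" for n
    unfolding S_def g_def by (rule continuous_closed_preimage_constant[OF cont]) auto
  have InfS: "S n \<noteq> {} \<Longrightarrow> Inf (S n) \<in> S n" for n
    by (rule closed_contains_Inf[OF _ _ clS]) (auto simp: S_def bdd_below_def)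
  have brange: "0 \<le> \<beta> n \<and> \<beta> n \<le> 1" for n
    using InfS[of n] unfolding \<beta>_def by (auto simp: S_def)
  have bsmall: "eventually (\<lambda>n. \<beta> n \<le> e \<and> g n (\<beta> n) = \<alpha>) sequentially" if e: "0 < e" "e < 1" for e
    using sol[OF e]
  proof eventually_elim
    case (elim n)
    then obtain b where b: "b \<in> {0..e}" "g n b = \<alpha>" by auto
    then have bS: "b \<in> S n" using e by (auto simp: S_def)
    then have ne: "S n \<noteq> {}" by auto
    have "Inf (S n) \<le> b" by (rule cInf_lower[OF bS]) (auto simp: S_def bdd_below_def)
    then show ?case using InfS[OF ne] b ne unfolding \<beta>_def by (auto simp: S_def)
  qed
  show "\<exists>\<beta> :: nat \<Rightarrow> real. (\<forall>n. 0 \<le> \<beta> n \<and> \<beta> n \<le> 1) \<and> \<beta> \<longlonglongrightarrow> 0 \<and>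
              (\<lambda>n. pBFDR M m v n (\<beta> n)) \<longlonglongrightarrow> \<alpha>"
  proof (intro exI conjI allI)
    show "0 \<le> \<beta> n" "\<beta> n \<le> 1" for n using brange by auto
    show "\<beta> \<longlonglongrightarrow> 0"
    proof (rule tendstoI)
      fix e :: real assume e: "0 < e"
      have "eventually (\<lambda>n. \<beta> n \<le> min (e/2) (1/2)) sequentially"
      proof -
        have "min (e/2) (1/2) < 1" "0 < min (e/2) (1/2)" using e by auto
        from bsmall[OF this(2,1)] show ?thesis by (rule eventually_mono) simp
      qed
      then show "eventually (\<lambda>n. dist (\<beta> n) 0 < e) sequentially"
        using brange e by (auto elim!: eventually_mono)
    qed
    have "eventually (\<lambda>n. g n (\<beta> n) = \<alpha>) sequentially"
      using bsmall[of "1/2"] by (auto elim: eventually_mono)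
    then show "(\<lambda>n. pBFDR M m v n (\<beta> n)) \<longlonglongrightarrow> \<alpha>"
      unfolding g_def by (rule tendsto_eventually)
  qed
qed

end
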